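(* Consider the Boston mechanism on a finite set $S$ of students and a finite set $C$ of colleges, as described in the context, and suppose $S=N\sqcup M'$, where students in $N$ (sincere) can only submit their true preference ranking, while students in $M'$ (sophisticated) may submit any ranking. Consider the simultaneous-move game in which each student chooses a submitted ranking from their action set and receives the college assigned by the Boston mechanism, evaluated by their true preferences. Then every sincere student $s\in N$ is assigned the same college (or outside option) in every pure-strategy Nash equilibrium of this game.
   Context: Each student $s$ has a strict true preference order $\succ_s$ over $C\cup\{\emptyset\}$ ($\emptyset$ = unassigned). Each college $c$ has a capacity $q_c\geq 1$ and a strict priority ranking $\succ_c$ over $S$. Each student submits a strict ranking of (a subset of) colleges. The Boston mechanism runs in rounds $k=1,2,\dots$: in round $k$, every student not yet assigned applies to the $k$-th college on their submitted ranking (if any); each college, considering only its round-$k$ applicants, permanently assigns them in order of its priority ranking up to its remaining capacity and rejects the rest; assignments are final. Students never assigned receive $\emptyset$. A pure-strategy Nash equilibrium is a profile of submitted rankings, each in the respective student's action set, such that no student can obtain a strictly better assignment (according to their true preferences) by unilaterally changing to another ranking in their action set. *)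

theory Defs
  imports Main
begin

text \<open>An assignment is 's \<Rightarrow> 'c option,
  with None the outside option (unassigned). A submitted ranking is a list of colleges
  (position 0 = first choice). True preferences of student s are a strict relation
  pref s on 'c option ((x,y) \<in> pref s means x is strictly preferred to y); priorities
  of college c are a strict relation prio c on students ((t,s) \<in> prio c means t has
  higher priority than s).\<close>

definition applicants ::
  "'s set \<Rightarrow> ('s \<Rightarrow> 'c list) \<Rightarrow> ('s \<Rightarrow> 'c option) \<Rightarrow> nat \<Rightarrow> 'c \<Rightarrow> 's set" where
  "applicants S P A k c = {s \<in> S. A s = None \<and> k < length (P s) \<and> P s ! k = c}"

definition remaining_cap ::
  "'s set \<Rightarrow> ('c \<Rightarrow> nat) \<Rightarrow> ('s \<Rightarrow> 'c option) \<Rightarrow> 'c \<Rightarrow> nat" where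
  "remaining_cap S q A c = q c - card {s \<in> S. A s = Some c}"

text \<open>Round k (0-indexed) of the Boston mechanism: each unassigned student applies to
  the k-th college of her list; college c permanently accepts its round-k applicants in
  priority order up to its remaining capacity.\<close>
definition boston_step ::
  "'s set \<Rightarrow> ('c \<Rightarrow> nat) \<Rightarrow> ('c \<Rightarrow> ('s \<times> 's) set) \<Rightarrow> ('s \<Rightarrow> 'c list) \<Rightarrow> nat
    \<Rightarrow> ('s \<Rightarrow> 'c option) \<Rightarrow> ('s \<Rightarrow> 'c option)" where
  "boston_step S q prio P k A = (\<lambda>s.
     if s \<in> applicants S P A k (P s ! k) \<and>
        card {t \<in> applicants S P A k (P s ! k). (t, s) \<in> prio (P s ! k)}
          < remaining_cap S q A (P s ! k)
     then Some (P s ! k) else A s)"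

fun boston_upto ::
  "'s set \<Rightarrow> ('c \<Rightarrow> nat) \<Rightarrow> ('c \<Rightarrow> ('s \<times> 's) set) \<Rightarrow> ('s \<Rightarrow> 'c list) \<Rightarrow> nat
    \<Rightarrow> ('s \<Rightarrow> 'c option)" where
  "boston_upto S q prio P 0 = (\<lambda>_. None)"
| "boston_upto S q prio P (Suc k) = boston_step S q prio P k (boston_upto S q prio P k)"

definition boston ::
  "'s set \<Rightarrow> ('c \<Rightarrow> nat) \<Rightarrow> ('c \<Rightarrow> ('s \<times> 's) set) \<Rightarrow> ('s \<Rightarrow> 'c list) \<Rightarrow> ('s \<Rightarrow> 'c option)" where
  "boston S q prio P = boston_upto S q prio P (Max (insert 0 ((\<lambda>s. length (P s)) ` S)))"

definition true_ranking :: "'c set \<Rightarrow> ('c option \<times> 'c option) set \<Rightarrow> 'c list \<Rightarrow> bool" where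
  "true_ranking C R L \<longleftrightarrow> distinct L \<and> set L = {c \<in> C. (Some c, None) \<in> R}
      \<and> sorted_wrt (\<lambda>a b. (Some a, Some b) \<in> R) L"

definition action_set ::
  "'c set \<Rightarrow> ('s \<Rightarrow> ('c option \<times> 'c option) set) \<Rightarrow> 's set \<Rightarrow> 's \<Rightarrow> 'c list set" where
  "action_set C pref N s =
     (if s \<in> N then {L. true_ranking C (pref s) L} else {L. distinct L \<and> set L \<subseteq> C})"

definition pure_nash ::
  "'s set \<Rightarrow> 'c set \<Rightarrow> ('c \<Rightarrow> nat) \<Rightarrow> ('c \<Rightarrow> ('s \<times> 's) set)
    \<Rightarrow> ('s \<Rightarrow> ('c option \<times> 'c option) set) \<Rightarrow> 's set \<Rightarrow> ('s \<Rightarrow> 'c list) \<Rightarrow> bool" where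
  "pure_nash S C q prio pref N P \<longleftrightarrow>
     (\<forall>s \<in> S. P s \<in> action_set C pref N s) \<and>
     (\<forall>s \<in> S. \<forall>L \<in> action_set C pref N s.
        (boston S q prio (P(s := L)) s, boston S q prio P s) \<notin> pref s)"

end

theory Submission
  imports Defs
begin


lemma rank_count:
  assumes fin: "finite X" and XS: "X \<subseteq> S" and tr: "trans r" and ir: "irrefl r" and tot: "total_on S r"
  shows "card {a\<in>X. card {b\<in>X. (b,a)\<in>r} < n} = min n (card X)"
proof -
  define f where "f a = card {b\<in>X. (b,a)\<in>r}" for a
  have lt: "f a < f a'" if "a \<in> X" "a' \<in> X" "(a,a') \<in> r" for a a'
  proof -
    have "insert a {b\<in>X. (b,a)\<in>r} \<subseteq> {b\<in>X. (b,a')\<in>r}"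
      using that tr unfolding trans_def by blast
    moreover have "a \<notin> {b\<in>X. (b,a)\<in>r}" using ir by (auto simp: irrefl_on_def)
    ultimately show ?thesis unfolding f_def using fin
      by (metis (no_types, lifting) card_insert_disjoint card_mono finite_subset mem_Collect_eq subsetI Suc_le_eq)
  qed
  have inj: "inj_on f X"
  proof (rule inj_onI)
    fix a a' assume "a \<in> X" "a' \<in> X" "f a = f a'"
    then show "a = a'" using tot XS lt unfolding total_on_def
      by (metis less_irrefl subsetD)
  qed
  have bnd: "f a < card X" if "a \<in> X" for a
  proof -
    have "{b\<in>X. (b,a)\<in>r} \<subset> X" using that ir by (auto simp: irrefl_on_def)
    then show ?thesis unfolding f_def using fin by (simp add: psubset_card_mono)
  qed
  have img: "f ` X = {..<card X}"
  proof -
    have "f ` X \<subseteq> {..<card X}" using bnd by auto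
    moreover have "card (f ` X) = card {..<card X}" using card_image[OF inj] by simp
    ultimately show ?thesis by (simp add: card_subset_eq)
  qed
  have "{a\<in>X. f a < n} = X \<inter> f -` {..<n}" by auto
  have "f ` {a\<in>X. f a < n} = f ` X \<inter> {..<n}" by auto
  also have "\<dots> = {..<min n (card X)}" using img by auto
  finally have "f ` {a\<in>X. f a < n} = {..<min n (card X)}" .
  moreover have "inj_on f {a\<in>X. f a < n}" using inj by (rule inj_on_subset) auto
  ultimately have "card {a\<in>X. f a < n} = card {..<min n (card X)}"
    by (metis card_image)
  then show ?thesis unfolding f_def by simp
qed



definition beats :: "('s \<Rightarrow> 'c \<Rightarrow> nat) \<Rightarrow> ('c \<Rightarrow> ('s \<times> 's) set) \<Rightarrow> 's \<Rightarrow> 's \<Rightarrow> 'c \<Rightarrow> bool" where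
  "beats cls prio y x c \<longleftrightarrow> cls y c < cls x c \<or> (cls y c = cls x c \<and> (y,x) \<in> prio c)"

definition stable_like where
"stable_like S C N q prio pref cls D \<mu> \<longleftrightarrow>
  (\<forall>x\<in>S. \<mu> x \<in> insert None (Some ` C)) \<and>
  (\<forall>x\<in>S. \<mu> x = None \<or> (\<mu> x, None) \<in> pref x) \<and>
  (\<forall>c\<in>C. card {x\<in>S. \<mu> x = Some c} \<le> q c) \<and>
  (\<forall>x\<in>S. \<forall>c\<in>C. (Some c, \<mu> x) \<in> pref x \<longrightarrow>
      q c \<le> card {y\<in>S. \<mu> y = Some c} \<and> (\<forall>y\<in>S. \<mu> y = Some c \<longrightarrow> beats cls prio y x c)) \<and>
  (\<forall>x\<in>S\<inter>N. \<forall>d. \<mu> x = Some d \<longrightarrow> d \<in> D x)"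

lemma abstract_main:
  fixes S :: "'s set" and C :: "'c set"
  assumes fin: "finite S"
    and prefo: "\<And>x. x \<in> S \<Longrightarrow> strict_linear_order_on (insert None (Some ` C)) (pref x)"
    and asym: "\<And>c x y. c \<in> C \<Longrightarrow> (x,y) \<in> prio c \<Longrightarrow> (y,x) \<notin> prio c"
    and stm: "stable_like S C N q prio pref cls D \<mu>"
    and stn: "stable_like S C N q prio pref cls D \<nu>"
    and clsN: "\<And>x c. x \<notin> N \<Longrightarrow> cls x c = 0"
    and clsD: "\<And>x d e. x \<in> S \<Longrightarrow> x \<in> N \<Longrightarrow> d \<in> D x \<Longrightarrow> e \<in> D x \<Longrightarrow> (Some d, Some e) \<in> pref x \<Longrightarrow> cls x d < cls x e"
    and iS: "i \<in> S" and iN: "i \<in> N"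
  shows "(\<mu> i, \<nu> i) \<notin> pref i"
proof
  assume iM0: "(\<mu> i, \<nu> i) \<in> pref i"
  have trp: "trans (pref x)" "irrefl (pref x)" "total_on (insert None (Some ` C)) (pref x)" if "x \<in> S" for x
    using prefo[OF that] by (auto simp: strict_linear_order_on_def)
  from stm have rm: "\<And>x. x\<in>S \<Longrightarrow> \<mu> x \<in> insert None (Some ` C)"
    and irm: "\<And>x. x\<in>S \<Longrightarrow> \<mu> x = None \<or> (\<mu> x, None) \<in> pref x"
    and fm: "\<And>c. c\<in>C \<Longrightarrow> card {x\<in>S. \<mu> x = Some c} \<le> q c"
    and bm: "\<And>x c. x\<in>S \<Longrightarrow> c\<in>C \<Longrightarrow> (Some c, \<mu> x) \<in> pref x \<Longrightarrow>
      q c \<le> card {y\<in>S. \<mu> y = Some c} \<and> (\<forall>y\<in>S. \<mu> y = Some c \<longrightarrow> beats cls prio y x c)"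
    and dm: "\<And>x d. x\<in>S \<Longrightarrow> x \<in> N \<Longrightarrow> \<mu> x = Some d \<Longrightarrow> d \<in> D x"
    unfolding stable_like_def by blast+
  from stn have rn: "\<And>x. x\<in>S \<Longrightarrow> \<nu> x \<in> insert None (Some ` C)"
    and irn: "\<And>x. x\<in>S \<Longrightarrow> \<nu> x = None \<or> (\<nu> x, None) \<in> pref x"
    and fn: "\<And>c. c\<in>C \<Longrightarrow> card {x\<in>S. \<nu> x = Some c} \<le> q c"
    and bn: "\<And>x c. x\<in>S \<Longrightarrow> c\<in>C \<Longrightarrow> (Some c, \<nu> x) \<in> pref x \<Longrightarrow>
      q c \<le> card {y\<in>S. \<nu> y = Some c} \<and> (\<forall>y\<in>S. \<nu> y = Some c \<longrightarrow> beats cls prio y x c)"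
    and dn: "\<And>x d. x\<in>S \<Longrightarrow> x \<in> N \<Longrightarrow> \<nu> x = Some d \<Longrightarrow> d \<in> D x"
    unfolding stable_like_def by blast+
  have basym: False if "beats cls prio y x c" "beats cls prio x y c" "c \<in> C" for x y c
    using that asym unfolding beats_def by auto
  define M where "M = {x\<in>S. (\<mu> x, \<nu> x) \<in> pref x}"
  have finM: "finite M" using fin unfolding M_def by auto
  have iM: "i \<in> M" using iS iM0 unfolding M_def by auto
  have M_some: "\<exists>c\<in>C. \<mu> x = Some c" if "x \<in> M" for x
  proof -
    have xS: "x \<in> S" and p: "(\<mu> x, \<nu> x) \<in> pref x" using that unfolding M_def by auto
    have "\<mu> x \<noteq> None"
    proof
      assume mN: "\<mu> x = None"
      have "\<nu> x \<noteq> None"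
      proof
        assume "\<nu> x = None" then show False using p mN trp(2)[OF xS] by (auto simp: irrefl_on_def)
      qed
      then have "(\<nu> x, None) \<in> pref x" using irn[OF xS] by auto
      then have "(None, None) \<in> pref x" using p mN trp(1)[OF xS] unfolding trans_def by metis
      then show False using trp(2)[OF xS] by (auto simp: irrefl_on_def)
    qed
    then show ?thesis using rm[OF xS] by auto
  qed
  define T where "T = {c. \<exists>x\<in>M. \<mu> x = Some c}"
  have TC: "T \<subseteq> C" using M_some unfolding T_def by fastforce
  have finT: "finite T"
  proof -
    have "T \<subseteq> the ` \<mu> ` M" unfolding T_def by (auto simp: image_iff) (metis option.sel)
    then show ?thesis using finM by (meson finite_imageI finite_subset)
  qed
  have T_full: "q c \<le> card {y\<in>S. \<nu> y = Some c} \<and> (\<forall>y\<in>S. \<nu> y = Some c \<longrightarrow> beats cls prio y x c)"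
    if "x \<in> M" "\<mu> x = Some c" for x c
  proof -
    have "c \<in> C" using M_some[OF that(1)] that(2) by auto
    moreover have "x \<in> S" "(Some c, \<nu> x) \<in> pref x" using that unfolding M_def by auto
    ultimately show ?thesis using bn by blast
  qed
  have step3: "{y\<in>S. \<nu> y = Some c \<and> \<mu> y \<noteq> Some c} \<subseteq> M" if cT: "c \<in> T" for c
  proof
    fix y assume y: "y \<in> {y\<in>S. \<nu> y = Some c \<and> \<mu> y \<noteq> Some c}"
    then have yS: "y \<in> S" and nyc: "\<nu> y = Some c" and myc: "\<mu> y \<noteq> Some c" by auto
    obtain x where xM: "x \<in> M" and mxc: "\<mu> x = Some c" using cT unfolding T_def by auto
    have cC: "c \<in> C" using cT TC by auto
    have b1: "beats cls prio y x c" using T_full[OF xM mxc] yS nyc by auto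
    show "y \<in> M"
    proof (rule ccontr)
      assume "y \<notin> M"
      then have np: "(\<mu> y, \<nu> y) \<notin> pref y" using yS unfolding M_def by auto
      have "\<mu> y \<noteq> \<nu> y" using nyc myc by auto
      then have "(\<nu> y, \<mu> y) \<in> pref y" using np trp(3)[OF yS] rm[OF yS] rn[OF yS]
        unfolding total_on_def by blast
      then have "(Some c, \<mu> y) \<in> pref y" using nyc by simp
      then have "beats cls prio x y c" using bm[OF yS cC] xM mxc unfolding M_def by auto
      then show False using b1 basym cC by blast
    qed
  qed
  have percount: "card {x\<in>M. \<mu> x = Some c} \<le> card {x\<in>M. \<nu> x = Some c}" if cT: "c \<in> T" for c
  proof -
    have cC: "c \<in> C" using cT TC by auto
    define U where "U = {y\<in>S. \<mu> y = Some c}"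
    define V where "V = {y\<in>S. \<nu> y = Some c}"
    have fU: "finite U" "finite V" using fin unfolding U_def V_def by auto
    obtain x where xM: "x \<in> M" and mxc: "\<mu> x = Some c" using cT unfolding T_def by auto
    have qV: "q c \<le> card V" using T_full[OF xM mxc] unfolding V_def by auto
    have qU: "card U \<le> q c" using fm[OF cC] unfolding U_def by auto
    have "{x\<in>M. \<mu> x = Some c} \<subseteq> U - V"
      unfolding U_def V_def M_def using trp(2) by (auto simp: irrefl_on_def)
    then have "card {x\<in>M. \<mu> x = Some c} \<le> card (U - V)" using fU by (simp add: card_mono)
    also have "card (U - V) = card U - card (U \<inter> V)" using fU by (simp add: card_Diff_subset_Int)
    also have "\<dots> \<le> card V - card (V \<inter> U)" using qU qV by (simp add: Int_commute)
    also have "\<dots> = card (V - U)" using fU by (simp add: card_Diff_subset_Int)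
    also have "card (V - U) \<le> card {x\<in>M. \<nu> x = Some c}"
    proof (rule card_mono)
      show "finite {x\<in>M. \<nu> x = Some c}" using finM by auto
      show "V - U \<subseteq> {x\<in>M. \<nu> x = Some c}" using step3[OF cT] unfolding U_def V_def by auto
    qed
    finally show ?thesis .
  qed
  have cardM: "card M = (\<Sum>c\<in>T. card {x\<in>M. \<mu> x = Some c})"
  proof -
    have "M = (\<Union>c\<in>T. {x\<in>M. \<mu> x = Some c})" using M_some unfolding T_def by fastforce
    then have "card M = card (\<Union>c\<in>T. {x\<in>M. \<mu> x = Some c})" by simp
    also have "\<dots> = (\<Sum>c\<in>T. card {x\<in>M. \<mu> x = Some c})"
      by (rule card_UN_disjoint) (use finT finM in auto)
    finally show ?thesis .
  qed
  have cardV: "card {x\<in>M. \<nu> x \<in> Some ` T} = (\<Sum>c\<in>T. card {x\<in>M. \<nu> x = Some c})"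
  proof -
    have "{x\<in>M. \<nu> x \<in> Some ` T} = (\<Union>c\<in>T. {x\<in>M. \<nu> x = Some c})" by auto
    then have "card {x\<in>M. \<nu> x \<in> Some ` T} = card (\<Union>c\<in>T. {x\<in>M. \<nu> x = Some c})" by simp
    also have "\<dots> = (\<Sum>c\<in>T. card {x\<in>M. \<nu> x = Some c})"
      by (rule card_UN_disjoint) (use finT finM in auto)
    finally show ?thesis .
  qed
  have "card M \<le> card {x\<in>M. \<nu> x \<in> Some ` T}"
    unfolding cardM cardV by (rule sum_mono) (rule percount)
  then have allT: "{x\<in>M. \<nu> x \<in> Some ` T} = M"
    using finM by (metis (no_types, lifting) card_seteq mem_Collect_eq subsetI)
  define r where "r x = cls x (the (\<mu> x))" for x
  have finMN: "finite (M \<inter> N)" using finM by auto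
  have neMN: "M \<inter> N \<noteq> {}" using iM iN by auto
  define m where "m = Max (r ` (M \<inter> N))"
  obtain x where xMN: "x \<in> M \<inter> N" and rx: "r x = m"
    using Max_in[of "r ` (M \<inter> N)"] finMN neMN unfolding m_def by fastforce
  have xM: "x \<in> M" and xN: "x \<in> N" and xS: "x \<in> S" using xMN unfolding M_def by auto
  obtain d where nxd: "\<nu> x = Some d" and dT: "d \<in> T" using xM allT by blast
  obtain z where zM: "z \<in> M" and mzd: "\<mu> z = Some d" using dT unfolding T_def by auto
  have zS: "z \<in> S" using zM unfolding M_def by auto
  have "beats cls prio x z d" using T_full[OF zM mzd] xS nxd by auto
  then have le: "cls x d \<le> cls z d" unfolding beats_def by auto
  obtain e where mxe: "\<mu> x = Some e" using M_some xM by auto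
  have "(Some e, Some d) \<in> pref x" using xM mxe nxd unfolding M_def by auto
  then have lt: "cls x e < cls x d" using clsD[OF xS xN dm[OF xS xN mxe] dn[OF xS xN nxd]] by simp
  then have "cls z d > 0" using le by simp
  then have zN: "z \<in> N" using clsN by (metis less_irrefl)
  have "r z \<le> m" unfolding m_def using zM zN finMN by (auto intro: Max_ge)
  moreover have "r z > r x" unfolding r_def using mzd mxe lt le by simp
  ultimately show False using rx by simp
qed



definition App where "App S q prio P k c = applicants S P (boston_upto S q prio P k) k c"
definition Rem where "Rem S q prio P k c = remaining_cap S q (boston_upto S q prio P k) c"
definition Acc where "Acc S q prio P k c =
  {s \<in> App S q prio P k c. card {t\<in>App S q prio P k c. (t,s)\<in>prio c} < Rem S q prio P k c}"
definition Asg where "Asg S q prio P k c = {s\<in>S. boston_upto S q prio P k s = Some c}"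

lemma App_iff: "s \<in> App S q prio P k c \<longleftrightarrow> s \<in> S \<and> boston_upto S q prio P k s = None \<and> k < length (P s) \<and> P s ! k = c"
  by (simp add: App_def applicants_def)

lemma Acc_App: "Acc S q prio P k c \<subseteq> App S q prio P k c"
  by (auto simp: Acc_def)

lemma step_char:
  "(boston_upto S q prio P (Suc k) s = Some c) \<longleftrightarrow>
    (boston_upto S q prio P k s = Some c \<or> s \<in> Acc S q prio P k c)"
proof (cases "boston_upto S q prio P k s = None")
  case True
  then show ?thesis
    by (auto simp: boston_step_def Acc_def App_def Rem_def applicants_def)
next
  case False
  then have "s \<notin> applicants S P (boston_upto S q prio P k) k x" for x
    by (auto simp: applicants_def)
  then show ?thesis using False
    by (auto simp: boston_step_def Acc_def App_def Rem_def)
qed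

lemma Acc_S: "s \<in> Acc S q prio P k c \<Longrightarrow> s \<in> S \<and> boston_upto S q prio P k s = None \<and> k < length (P s) \<and> P s ! k = c"
  by (simp add: Acc_def App_iff)

lemma step_keep: "boston_upto S q prio P k s = Some c \<Longrightarrow> boston_upto S q prio P (Suc k) s = Some c"
  using step_char[of S q prio P k s c] by blast

lemma persist:
  assumes "boston_upto S q prio P k s = Some c" "k \<le> k'" shows "boston_upto S q prio P k' s = Some c"
  using assms(2)
proof (induction k' rule: dec_induct)
  case base then show ?case using assms(1) by simp
next
  case (step n) then show ?case by (intro step_keep) simp
qed

lemma none_before: "boston_upto S q prio P k' s = None \<Longrightarrow> k \<le> k' \<Longrightarrow> boston_upto S q prio P k s = None"
  by (cases "boston_upto S q prio P k s") (auto dest: persist)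


lemma assigned_round:
  "boston_upto S q prio P k s = Some c \<Longrightarrow> \<exists>j<k. boston_upto S q prio P j s = None \<and> s \<in> Acc S q prio P j c"
proof (induction k)
  case 0
  then show ?case by simp
next
  case (Suc k)
  show ?case
  proof (cases "boston_upto S q prio P k s = Some c")
    case True
    then obtain j where "j < k" "boston_upto S q prio P j s = None \<and> s \<in> Acc S q prio P j c"
      using Suc.IH by blast
    then show ?thesis by (intro exI[of _ j]) simp
  next
    case False
    then have A: "s \<in> Acc S q prio P k c" using Suc.prems False step_char[of S q prio P k s c] by blast
    then have "boston_upto S q prio P k s = None" using Acc_S[OF A] by simp
    then show ?thesis using \<open>s \<in> Acc S q prio P k c\<close> by (intro exI[of _ k]) simp
  qed
qed

lemma assigned_inS: "boston_upto S q prio P k s = Some c \<Longrightarrow> s \<in> S"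
proof -
  assume a: "boston_upto S q prio P k s = Some c"
  obtain j where j: "s \<in> Acc S q prio P j c" using assigned_round[OF a] by blast
  show ?thesis using Acc_S[OF j] by simp
qed

lemma assigned_list: "boston_upto S q prio P k s = Some c \<Longrightarrow> c \<in> set (P s)"
proof -
  assume a: "boston_upto S q prio P k s = Some c"
  obtain j where j: "s \<in> Acc S q prio P j c" using assigned_round[OF a] by blast
  show ?thesis using Acc_S[OF j] by (auto simp: in_set_conv_nth)
qed

lemma Asg_Suc: "Asg S q prio P (Suc k) c = Asg S q prio P k c \<union> Acc S q prio P k c"
proof -
  have "s \<in> Asg S q prio P (Suc k) c \<longleftrightarrow> s \<in> Asg S q prio P k c \<union> Acc S q prio P k c" for s
  proof
    assume "s \<in> Asg S q prio P (Suc k) c"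
    then show "s \<in> Asg S q prio P k c \<union> Acc S q prio P k c"
      unfolding Asg_def mem_Collect_eq Un_iff using step_char[of S q prio P k s c] by blast
  next
    assume "s \<in> Asg S q prio P k c \<union> Acc S q prio P k c"
    then show "s \<in> Asg S q prio P (Suc k) c"
      unfolding Asg_def mem_Collect_eq Un_iff using step_char[of S q prio P k s c] Acc_S[of s S q prio P k c] by blast
  qed
  then show ?thesis by blast
qed

lemma App_sub: "App S q prio P k c \<subseteq> S"
  unfolding App_def applicants_def by auto

lemma Acc_sub: "Acc S q prio P k c \<subseteq> S"
  using Acc_App[of S q prio P k c] App_sub[of S q prio P k c] by blast

lemma Asg_sub: "Asg S q prio P k c \<subseteq> S"
  unfolding Asg_def by auto

lemma Asg_Acc_disj: "Asg S q prio P k c \<inter> Acc S q prio P k c = {}"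
proof -
  have False if "s \<in> Asg S q prio P k c" "s \<in> Acc S q prio P k c" for s
    using that(1) Acc_S[OF that(2)] unfolding Asg_def by simp
  then show ?thesis by blast
qed



lemma card_Acc:
  assumes "finite S" "strict_linear_order_on S (prio c)"
  shows "card (Acc S q prio P k c) = min (Rem S q prio P k c) (card (App S q prio P k c))"
proof -
  have "App S q prio P k c \<subseteq> S" using App_iff[of _ S q prio P k c] by blast
  then show ?thesis unfolding Acc_def
    using rank_count[of "App S q prio P k c" S "prio c"] assms
    by (simp add: strict_linear_order_on_def finite_subset)
qed

lemma feas:
  assumes fin: "finite S" and so: "strict_linear_order_on S (prio c)"
  shows "card (Asg S q prio P k c) \<le> q c"
proof (induction k)
  case 0
  then show ?case by (simp add: Asg_def)
next
  case (Suc k)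
  have f: "finite (Asg S q prio P k c)" "finite (Acc S q prio P k c)"
    using fin Acc_sub[of S q prio P k c] App_sub[of S q prio P k c] Asg_sub[of S q prio P k c] by (auto intro: finite_subset)
  have "card (Asg S q prio P (Suc k) c) = card (Asg S q prio P k c) + card (Acc S q prio P k c)"
    unfolding Asg_Suc[of S q prio P k c] using card_Un_disjoint[OF f(1) f(2) Asg_Acc_disj] .
  also have "card (Acc S q prio P k c) \<le> Rem S q prio P k c"
    using card_Acc[where S=S and prio=prio and c=c and q=q and P=P and k=k, OF fin so] by simp
  also have "Rem S q prio P k c = q c - card (Asg S q prio P k c)"
    by (simp add: Rem_def remaining_cap_def Asg_def)
  finally show ?case using Suc.IH by simp
qed

lemma full:
  assumes fin: "finite S" and so: "strict_linear_order_on S (prio c)"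
    and H: "H \<subseteq> App S q prio P k c" "Rem S q prio P k c \<le> card H"
  shows "card (Asg S q prio P (Suc k) c) = q c"
proof -
  have f: "finite (Asg S q prio P k c)" "finite (Acc S q prio P k c)" "finite (App S q prio P k c)"
    using fin Acc_sub[of S q prio P k c] App_sub[of S q prio P k c] Asg_sub[of S q prio P k c] by (auto intro: finite_subset)
  have "card H \<le> card (App S q prio P k c)" using H f by (simp add: card_mono)
  then have cA: "card (Acc S q prio P k c) = Rem S q prio P k c"
    using card_Acc[where S=S and prio=prio and c=c and q=q and P=P and k=k, OF fin so] H by simp
  have e1: "card (Asg S q prio P (Suc k) c) = card (Asg S q prio P k c) + card (Acc S q prio P k c)"
    unfolding Asg_Suc[of S q prio P k c] using card_Un_disjoint[OF f(1) f(2) Asg_Acc_disj] .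
  have e2: "Rem S q prio P k c = q c - card (Asg S q prio P k c)"
    by (simp add: Rem_def remaining_cap_def Asg_def)
  show ?thesis using e1 e2 feas[where S=S and prio=prio and c=c and q=q and P=P and k=k, OF fin so] cA by simp
qed

lemma stayfull:
  assumes "card (Asg S q prio P k c) = q c" "k \<le> k'"
  shows "Asg S q prio P k' c = Asg S q prio P k c"
  using assms(2)
proof (induction k' rule: dec_induct)
  case base
  then show ?case by simp
next
  case (step n)
  have "Rem S q prio P n c = 0" using step.IH assms(1)
    by (simp add: Rem_def remaining_cap_def Asg_def)
  then have "Acc S q prio P n c = {}" by (simp add: Acc_def)
  then show ?case using step.IH Asg_Suc[of S q prio P n c] by simp
qed

lemma Hlemma:
  assumes so: "strict_linear_order_on S (prio c)" and fin: "finite S"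
    and H: "H \<subseteq> {t\<in>App S q prio P k c. (t,x)\<in>prio c}" "Rem S q prio P k c \<le> card H"
    and y: "y \<in> Acc S q prio P k c" and yx: "y \<noteq> x" and xS: "x \<in> S"
  shows "(y,x) \<in> prio c"
proof (rule ccontr)
  assume nyx: "(y,x) \<notin> prio c"
  have yS: "y \<in> S" using Acc_S[OF y] by blast
  have "(x,y) \<in> prio c" using so nyx yx xS yS unfolding strict_linear_order_on_def total_on_def by blast
  then have "H \<subseteq> {t\<in>App S q prio P k c. (t,y)\<in>prio c}" using H so
    unfolding strict_linear_order_on_def trans_def by blast
  moreover have "finite {t\<in>App S q prio P k c. (t,y)\<in>prio c}"
    using fin App_iff[of _ S q prio P k c] by (auto intro: finite_subset)
  ultimately have "card H \<le> card {t\<in>App S q prio P k c. (t,y)\<in>prio c}" by (simp add: card_mono)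
  then show False using y H unfolding Acc_def by simp
qed



definition idx :: "'c list \<Rightarrow> 'c \<Rightarrow> nat" where
  "idx L c = (LEAST k. k < length L \<and> L ! k = c)"

lemma idx_nth: "distinct L \<Longrightarrow> k < length L \<Longrightarrow> idx L (L ! k) = k"
  unfolding idx_def
  by (rule Least_equality) (auto simp: nth_eq_iff_index_eq not_less[symmetric])

definition clsN :: "'s set \<Rightarrow> ('s \<Rightarrow> 'c list) \<Rightarrow> 's \<Rightarrow> 'c \<Rightarrow> nat" where
  "clsN N P y c = (if y \<in> N then idx (P y) c else 0)"

definition DN :: "'s set \<Rightarrow> ('s \<Rightarrow> 'c list) \<Rightarrow> 's \<Rightarrow> 'c set" where
  "DN N P y = (if y \<in> N then set (P y) else {})"

lemma sorted_unique:
  assumes "sorted_wrt R xs" "sorted_wrt R ys" "set xs = set ys" "distinct xs" "distinct ys"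
    and asy: "\<And>a b. R a b \<Longrightarrow> \<not> R b a"
  shows "xs = ys"
  using assms(1-5)
proof (induction xs arbitrary: ys)
  case Nil
  then show ?case by simp
next
  case (Cons a xs)
  obtain b ys' where ys: "ys = b # ys'" using Cons.prems(3) by (cases ys) auto
  have ab: "a = b"
  proof (rule ccontr)
    assume "a \<noteq> b"
    then have "a \<in> set ys'" "b \<in> set xs" using Cons.prems(3) ys by auto
    then have "R b a" "R a b" using Cons.prems(1,2) ys by auto
    then show False using asy by blast
  qed
  have "set xs = set ys'" using Cons.prems(3-5) ys ab by auto
  then have "xs = ys'" using Cons.IH Cons.prems ys by auto
  then show ?case using ys ab by simp
qed

lemma boston_K:
  assumes "finite S"
  shows "boston S q prio P = boston_upto S q prio P (Max (insert 0 ((\<lambda>s. length (P s)) ` S)))"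
    "s \<in> S \<Longrightarrow> length (P s) \<le> Max (insert 0 ((\<lambda>s. length (P s)) ` S))"
  using assms by (auto simp: boston_def)

lemma dev_single:
  assumes fin: "finite S" and xS: "x \<in> S" and ir: "(x,x) \<notin> prio c"
    and lt: "card {t\<in>S. t \<noteq> x \<and> 0 < length (P t) \<and> P t ! 0 = c \<and> (t,x) \<in> prio c} < q c"
  shows "boston S q prio (P(x:=[c])) x = Some c"
proof -
  define P2 where "P2 = P(x:=[c])"
  have app: "App S q prio P2 0 c = {t\<in>S. 0 < length (P2 t) \<and> P2 t ! 0 = c}"
    by (auto simp: App_iff)
  have "{t\<in>App S q prio P2 0 c. (t,x)\<in>prio c} = {t\<in>S. t \<noteq> x \<and> 0 < length (P t) \<and> P t ! 0 = c \<and> (t,x) \<in> prio c}"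
    unfolding app using ir by (auto simp: P2_def)
  moreover have "Rem S q prio P2 0 c = q c" by (simp add: Rem_def remaining_cap_def)
  moreover have "x \<in> App S q prio P2 0 c" unfolding app using xS by (simp add: P2_def)
  ultimately have "x \<in> Acc S q prio P2 0 c" unfolding Acc_def using lt by simp
  then have b1: "boston_upto S q prio P2 (Suc 0) x = Some c" using step_char[of S q prio P2 0 x c] by blast
  have l1: "length (P2 x) = 1" by (simp add: P2_def)
  have m: "Suc 0 \<le> Max (insert 0 ((\<lambda>s. length (P2 s)) ` S))"
    using boston_K(2)[OF fin xS, of P2] l1 by simp
  have "boston S q prio P2 x = Some c" unfolding boston_def using persist[OF b1 m] .
  then show ?thesis by (simp add: P2_def)
qed

lemma dev_empty:
  assumes fin: "finite S"
  shows "boston S q prio (P(x:=[])) x = None"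
proof -
  have "boston_upto S q prio (P(x:=[])) k x = None" for k
    using assigned_list[of S q prio "P(x:=[])" k x] by (cases "boston_upto S q prio (P(x:=[])) k x") auto
  then show ?thesis unfolding boston_def by simp
qed


lemma nash_stable:
  assumes fin: "finite S" and NS: "N \<subseteq> S"
    and prefo: "\<And>st. st \<in> S \<Longrightarrow> strict_linear_order_on (insert None (Some ` C)) (pref st)"
    and qpos: "\<And>c. c \<in> C \<Longrightarrow> q c \<ge> 1"
    and prioo: "\<And>c. c \<in> C \<Longrightarrow> strict_linear_order_on S (prio c)"
    and ne: "pure_nash S C q prio pref N P"
  shows "stable_like S C N q prio pref (clsN N P) (DN N P) (boston S q prio P)"
proof -
  define K where "K = Max (insert 0 ((\<lambda>s. length (P s)) ` S))"
  define \<mu> where "\<mu> = boston S q prio P"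
  have muK: "\<mu> = boston_upto S q prio P K" unfolding \<mu>_def K_def boston_def ..
  have lenK: "length (P s) \<le> K" if "s \<in> S" for s
    unfolding K_def using boston_K(2)[OF fin that] .
  have act: "P s \<in> action_set C pref N s" if "s \<in> S" for s
    using ne that unfolding pure_nash_def by blast
  have dev: "(boston S q prio (P(s := L)) s, \<mu> s) \<notin> pref s" if "s \<in> S" "L \<in> action_set C pref N s" for s L
    using ne that unfolding pure_nash_def \<mu>_def by blast
  have trp: "trans (pref x)" "irrefl (pref x)" "total_on (insert None (Some ` C)) (pref x)" if "x \<in> S" for x
    using prefo[OF that] by (auto simp: strict_linear_order_on_def)
  have prp: "trans (prio c)" "irrefl (prio c)" "total_on S (prio c)" if "c \<in> C" for c
    using prioo[OF that] by (auto simp: strict_linear_order_on_def)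
  have trN: "true_ranking C (pref x) (P x)" if "x \<in> N" for x
    using act[of x] that NS unfolding action_set_def by auto
  have setC: "set (P x) \<subseteq> C" if "x \<in> S" for x
    using act[OF that] unfolding action_set_def true_ranking_def by (auto split: if_splits)
  have distP: "distinct (P x)" if "x \<in> S" for x
    using act[OF that] unfolding action_set_def true_ranking_def by (auto split: if_splits)
  have inl: "c \<in> set (P x)" if "x \<in> S" "\<mu> x = Some c" for x c
    using assigned_list[of S q prio P K x c] that muK by simp
  have range: "\<mu> x \<in> insert None (Some ` C)" if "x \<in> S" for x
    using inl[OF that] setC[OF that] by (cases "\<mu> x") auto
  have IR: "\<mu> x = None \<or> (\<mu> x, None) \<in> pref x" if xS: "x \<in> S" for x
  proof (cases "\<mu> x")
    case None then show ?thesis by simp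
  next
    case (Some d)
    show ?thesis
    proof (cases "x \<in> N")
      case True
      then have "d \<in> set (P x)" using inl[OF xS Some] by simp
      then show ?thesis using trN[OF True] Some unfolding true_ranking_def by auto
    next
      case False
      have "[] \<in> action_set C pref N x" using False unfolding action_set_def by simp
      then have "(None, \<mu> x) \<notin> pref x" using dev[OF xS] dev_empty[OF fin, of q prio P x] by fastforce
      moreover have "\<mu> x \<noteq> None" using Some by simp
      ultimately show ?thesis using trp(3)[OF xS] range[OF xS] unfolding total_on_def by blast
    qed
  qed
  have feasmu: "card {x\<in>S. \<mu> x = Some c} \<le> q c" if "c \<in> C" for c
    using feas[where S=S and prio=prio and c=c and q=q and P=P and k=K, OF fin prioo[OF that]]
    unfolding Asg_def muK .
  have AsgK: "Asg S q prio P K c = {y\<in>S. \<mu> y = Some c}" for c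
    unfolding Asg_def muK ..
  have idxP: "clsN N P y c = j" if "y \<in> N" "j < length (P y)" "P y ! j = c" for y j c
    unfolding clsN_def using that idx_nth[OF distP] NS by auto
  have block: "q c \<le> card {y\<in>S. \<mu> y = Some c} \<and> (\<forall>y\<in>S. \<mu> y = Some c \<longrightarrow> beats (clsN N P) prio y x c)"
    if xS: "x \<in> S" and cC: "c \<in> C" and pc: "(Some c, \<mu> x) \<in> pref x" for x c
  proof -
    have nmx: "\<mu> x \<noteq> Some c" using pc trp(2)[OF xS] by (auto simp: irrefl_on_def)
    show ?thesis
    proof (cases "x \<in> N")
      case True
      have tr: "true_ranking C (pref x) (P x)" using trN[OF True] .
      have acc: "(Some c, None) \<in> pref x"
        using IR[OF xS] pc trp(1)[OF xS] unfolding trans_def by metis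
      then have "c \<in> set (P x)" using tr cC unfolding true_ranking_def by auto
      then obtain k where kl: "k < length (P x)" and kc: "P x ! k = c" by (auto simp: in_set_conv_nth)
      have kK: "k < K" using kl lenK[OF xS] by simp
      have sw: "(Some (P x ! i), Some (P x ! j)) \<in> pref x" if "i < j" "j < length (P x)" for i j
        using tr that unfolding true_ranking_def sorted_wrt_iff_nth_less by auto
      have Bk: "boston_upto S q prio P k x = None"
      proof (cases "\<mu> x")
        case None
        then show ?thesis using none_before[of S q prio P K x k] muK kK by simp
      next
        case (Some d)
        then have "boston_upto S q prio P K x = Some d" using muK by simp
        then obtain j where jK: "j < K" and Bj: "boston_upto S q prio P j x = None"
          and jA: "x \<in> Acc S q prio P j d" using assigned_round[OF \<open>boston_upto S q prio P K x = Some d\<close>] by blast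
        have jl: "j < length (P x)" and jd: "P x ! j = d" using Acc_S[OF jA] by auto
        have "k < j"
        proof (rule ccontr)
          assume "\<not> k < j"
          then have "j < k \<or> j = k" by auto
          then have "(Some d, Some c) \<in> pref x \<or> d = c" using sw[of j k] kl jd kc by auto
          moreover have "(Some c, Some d) \<in> pref x" using pc Some by simp
          ultimately show False using trp(1,2)[OF xS] unfolding trans_def irrefl_on_def by blast
        qed
        then show ?thesis using none_before[OF Bj] by simp
      qed
      have xApp: "x \<in> App S q prio P k c" using App_iff[of x S q prio P k c] xS Bk kl kc by blast
      have xnAcc: "x \<notin> Acc S q prio P k c"
      proof
        assume "x \<in> Acc S q prio P k c"
        then have "boston_upto S q prio P (Suc k) x = Some c" using step_char[of S q prio P k x c] by blast
        then have "\<mu> x = Some c" using persist[of S q prio P "Suc k" x c K] kK muK by simp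
        then show False using nmx by simp
      qed
      define H where "H = {t\<in>App S q prio P k c. (t,x)\<in>prio c}"
      have RH: "Rem S q prio P k c \<le> card H"
        using xnAcc xApp unfolding Acc_def H_def by auto
      have Hs: "H \<subseteq> App S q prio P k c" unfolding H_def by blast
      have full1: "card (Asg S q prio P (Suc k) c) = q c"
        using full[where H=H and S=S and prio=prio and c=c and q=q and P=P and k=k, OF fin prioo[OF cC] Hs RH] .
      have sf: "Asg S q prio P K c = Asg S q prio P (Suc k) c"
        using stayfull[OF full1, of K] kK by simp
      have part1: "q c \<le> card {y\<in>S. \<mu> y = Some c}" using sf full1 AsgK[of c] by simp
      have part2: "beats (clsN N P) prio y x c" if yS: "y \<in> S" and myc: "\<mu> y = Some c" for y
      proof -
        have "y \<in> Asg S q prio P (Suc k) c" using sf AsgK[of c] yS myc by auto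
        then have bs: "boston_upto S q prio P (Suc k) y = Some c" unfolding Asg_def by simp
        obtain j where jk: "j < Suc k" and jA: "y \<in> Acc S q prio P j c"
          using assigned_round[OF bs] by blast
        have jl: "j < length (P y)" and jc: "P y ! j = c" using Acc_S[OF jA] by auto
        have cy: "clsN N P y c \<le> j" "y \<notin> N \<Longrightarrow> clsN N P y c = 0"
          using idxP[OF _ jl jc] by (auto simp: clsN_def)
        have cx: "clsN N P x c = k" using idxP[OF True kl kc] .
        show ?thesis
        proof (cases "j = k")
          case True
          have yx: "y \<noteq> x" using jA xnAcc True by auto
          have Hsub: "H \<subseteq> {t\<in>App S q prio P k c. (t,x)\<in>prio c}" unfolding H_def by blast
          have jA': "y \<in> Acc S q prio P k c" using jA True by simp
          have "(y,x) \<in> prio c"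
            using Hlemma[where H=H and S=S and prio=prio and c=c and q=q and P=P and k=k and x=x and y=y, OF prioo[OF cC] fin Hsub RH jA' yx xS] .
          then show ?thesis using cy cx True unfolding beats_def by auto
        next
          case False
          then have "j < k" using jk by simp
          then show ?thesis using cy cx unfolding beats_def by auto
        qed
      qed
      show ?thesis using part1 part2 by blast
    next
      case False
      have "[c] \<in> action_set C pref N x" using False cC unfolding action_set_def by simp
      then have nd: "boston S q prio (P(x := [c])) x \<noteq> Some c" using dev[OF xS] pc by fastforce
      define H0 where "H0 = {t\<in>S. t \<noteq> x \<and> 0 < length (P t) \<and> P t ! 0 = c \<and> (t,x) \<in> prio c}"
      have ge: "q c \<le> card H0"
        using dev_single[where S=S and x=x and prio=prio and c=c and q=q and P=P, OF fin xS] nd prp(2)[OF cC] unfolding H0_def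
        by (auto simp: irrefl_on_def) (meson not_less)
      have H0sub: "H0 \<subseteq> {t\<in>App S q prio P 0 c. (t,x)\<in>prio c}"
        unfolding H0_def by (auto simp: App_iff)
      have R0: "Rem S q prio P 0 c = q c" by (simp add: Rem_def remaining_cap_def)
      have H0s: "H0 \<subseteq> App S q prio P 0 c" using H0sub by blast
      have RH0: "Rem S q prio P 0 c \<le> card H0" using R0 ge by simp
      have full1: "card (Asg S q prio P (Suc 0) c) = q c"
        using full[where H=H0 and S=S and prio=prio and c=c and q=q and P=P and k=0, OF fin prioo[OF cC] H0s RH0] .
      have "H0 \<noteq> {}" using ge qpos[OF cC] by auto
      then obtain t where "t \<in> H0" by blast
      then have "t \<in> S" "0 < length (P t)" unfolding H0_def by auto
      then have K1: "Suc 0 \<le> K" using lenK[of t] by linarith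
      have sf: "Asg S q prio P K c = Asg S q prio P (Suc 0) c"
        using stayfull[OF full1 K1] .
      have part1: "q c \<le> card {y\<in>S. \<mu> y = Some c}" using sf full1 AsgK[of c] by simp
      have part2: "beats (clsN N P) prio y x c" if yS: "y \<in> S" and myc: "\<mu> y = Some c" for y
      proof -
        have "y \<in> Asg S q prio P (Suc 0) c" using sf AsgK[of c] yS myc by auto
        then have bs: "boston_upto S q prio P (Suc 0) y = Some c" unfolding Asg_def by simp
        obtain j where jk: "j < Suc 0" and jA: "y \<in> Acc S q prio P j c"
          using assigned_round[OF bs] by blast
        have j0: "j = 0" using jk by simp
        have jl: "0 < length (P y)" and jc: "P y ! 0 = c" using Acc_S[OF jA] j0 by auto
        have cy: "clsN N P y c = 0"
          using idxP[OF _ jl jc] by (auto simp: clsN_def)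
        have cx: "clsN N P x c = 0" using False by (simp add: clsN_def)
        have yx: "y \<noteq> x" using myc nmx by auto
        have "(y,x) \<in> prio c"
          using Hlemma[where H=H0 and S=S and prio=prio and c=c and q=q and P=P and k=0 and x=x and y=y, OF prioo[OF cC] fin H0sub RH0 jA[unfolded j0] yx xS] .
        then show ?thesis using cy cx unfolding beats_def by auto
      qed
      show ?thesis using part1 part2 by blast
    qed
  qed
  have Dm: "d \<in> DN N P x" if "x \<in> S \<inter> N" "\<mu> x = Some d" for x d
    using inl[of x d] that unfolding DN_def by auto
  show ?thesis
    unfolding stable_like_def \<mu>_def[symmetric]
    using range IR feasmu block Dm by blast
qed


theorem mainTheorem8:
  fixes S :: "'s set" and C :: "'c set" and N M' :: "'s set"
    and q :: "'c \<Rightarrow> nat" and prio :: "'c \<Rightarrow> ('s \<times> 's) set"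
    and pref :: "'s \<Rightarrow> ('c option \<times> 'c option) set"
    and P P' :: "'s \<Rightarrow> 'c list" and s :: 's
  assumes "finite S" and "finite C"
    and "S = N \<union> M'" and "N \<inter> M' = {}"
    and "\<And>st. st \<in> S \<Longrightarrow> strict_linear_order_on (insert None (Some ` C)) (pref st)"
    and "\<And>c. c \<in> C \<Longrightarrow> q c \<ge> 1"
    and "\<And>c. c \<in> C \<Longrightarrow> strict_linear_order_on S (prio c)"
    and "pure_nash S C q prio pref N P"
    and "pure_nash S C q prio pref N P'"
    and "s \<in> N"
  shows "boston S q prio P s = boston S q prio P' s"
proof -
  note fin = assms(1) and prefo = assms(5) and qpos = assms(6) and prioo = assms(7)
  have NS: "N \<subseteq> S" using assms(3) by auto
  have sS: "s \<in> S" using NS assms(10) by auto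
  have stP: "stable_like S C N q prio pref (clsN N P) (DN N P) (boston S q prio P)"
    by (rule nash_stable[OF fin NS prefo qpos prioo assms(8)])
  have stP'0: "stable_like S C N q prio pref (clsN N P') (DN N P') (boston S q prio P')"
    by (rule nash_stable[OF fin NS prefo qpos prioo assms(9)])
  have trp: "trans (pref x)" "irrefl (pref x)" "total_on (insert None (Some ` C)) (pref x)" if "x \<in> S" for x
    using prefo[OF that] by (auto simp: strict_linear_order_on_def)
  have asyR: "\<not> (Some b, Some a) \<in> pref x" if "x \<in> S" "(Some a, Some b) \<in> pref x" for x a b
    using trp(1,2)[OF that(1)] that(2) unfolding trans_def irrefl_on_def by blast
  have trr: "true_ranking C (pref x) (P x)" "true_ranking C (pref x) (P' x)" if xN: "x \<in> N" for x
  proof -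
    have xS: "x \<in> S" using xN NS by auto
    have "P x \<in> action_set C pref N x" "P' x \<in> action_set C pref N x"
      using assms(8,9) xS unfolding pure_nash_def by blast+
    then show "true_ranking C (pref x) (P x)" "true_ranking C (pref x) (P' x)"
      using xN unfolding action_set_def by auto
  qed
  have eqN: "P x = P' x" if xN: "x \<in> N" for x
  proof -
    have xS: "x \<in> S" using xN NS by auto
    show ?thesis
      using trr[OF xN] asyR[OF xS]
      by (intro sorted_unique[where R="\<lambda>a b. (Some a, Some b) \<in> pref x"]) (auto simp: true_ranking_def)
  qed
  have ce: "clsN N P' = clsN N P" "DN N P' = DN N P"
    using eqN by (auto simp: clsN_def DN_def fun_eq_iff)
  have stP': "stable_like S C N q prio pref (clsN N P) (DN N P) (boston S q prio P')"
    using stP'0 unfolding ce .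
  have asym: "(y,x) \<notin> prio c" if "c \<in> C" "(x,y) \<in> prio c" for c x y
    using prioo[OF that(1)] that(2) unfolding strict_linear_order_on_def trans_def irrefl_on_def by blast
  have cN: "clsN N P x c = 0" if "x \<notin> N" for x c using that by (simp add: clsN_def)
  have cD: "clsN N P x d < clsN N P x e"
    if xS: "x \<in> S" and xN: "x \<in> N" and d: "d \<in> DN N P x" and e: "e \<in> DN N P x" and de: "(Some d, Some e) \<in> pref x" for x d e
  proof -
    have tr: "true_ranking C (pref x) (P x)" using trr[OF xN] by simp
    have dist: "distinct (P x)" using tr by (simp add: true_ranking_def)
    obtain i where i: "i < length (P x)" "P x ! i = d" using d xN by (auto simp: DN_def in_set_conv_nth)
    obtain j where j: "j < length (P x)" "P x ! j = e" using e xN by (auto simp: DN_def in_set_conv_nth)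
    have ci: "clsN N P x d = i" using idx_nth[OF dist i(1)] i xN by (simp add: clsN_def)
    have cj: "clsN N P x e = j" using idx_nth[OF dist j(1)] j xN by (simp add: clsN_def)
    have "i < j"
    proof (rule ccontr)
      assume "\<not> i < j"
      then have "j < i \<or> i = j" by auto
      moreover have "j < i \<Longrightarrow> (Some e, Some d) \<in> pref x"
        using tr i j unfolding true_ranking_def sorted_wrt_iff_nth_less by auto
      moreover have "i = j \<Longrightarrow> d = e" using i j by simp
      ultimately show False using asyR[OF xS de] de trp(2)[OF xS] by (auto simp: irrefl_on_def)
    qed
    then show ?thesis using ci cj by simp
  qed
  have n1: "(boston S q prio P s, boston S q prio P' s) \<notin> pref s"
    by (rule abstract_main[OF fin prefo asym stP stP' cN cD sS assms(10)])
  have n2: "(boston S q prio P' s, boston S q prio P s) \<notin> pref s"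
    by (rule abstract_main[OF fin prefo asym stP' stP cN cD sS assms(10)])
  have r1: "boston S q prio P s \<in> insert None (Some ` C)"
    using stP sS unfolding stable_like_def by blast
  have r2: "boston S q prio P' s \<in> insert None (Some ` C)"
    using stP' sS unfolding stable_like_def by blast
  show ?thesis using n1 n2 r1 r2 trp(3)[OF sS] unfolding total_on_def by blast
qed


end
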